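(* For every $t=0,1,\dots,T-2$ and every $x\in\mathbb R$, $$\bar\omega_t(x)\le\bar\psi_t(\theta,S^U_t)+\bar\psi_t\big(\theta,\max(x,S^U_t)\big)-\gamma_t\theta+\alpha\,\bar\omega_{t+1}\big(\theta+\max(x,S^U_t)\big).$$
   Context: Model. Fix an integer horizon $T\ge 2$, a discount factor $\alpha\in(0,1]$, and for $t=0,\dots,T-1$: unit ordering costs $c_t\in\mathbb R$, a salvage coefficient $c_T\in\mathbb R$, setup costs $K_t\ge 0$, functions $G_t:\mathbb R\to\mathbb R$, and independent nonnegative random demands $D_0,\dots,D_{T-1}$ with right-continuous distribution functions $F_t$ and finite means; all expectations appearing are assumed finite. Put $C_t(y)=(c_t-\alpha c_{t+1})y+G_t(y)+\alpha c_{t+1}E[D_t]$. Standing assumptions: (i) each $C_t$ is convex with $C_t(y)\to+\infty$ as $|y|\to\infty$; (ii) $K_t\ge \alpha K_{t+1}$ for $t=0,\dots,T-2$; (iii) there are constants $\gamma_t\ge 0$ with $|C_t(x)-C_t(y)|\le\gamma_t|x-y|$ for all $x,y$. Grid construction. Fix $\theta>0$, $z_m=m\theta$, $Z_\theta=\{z_m:m\in\mathbb Z\}$, $f_t(n)=F_t(z_{n+1})-F_t(z_n)$ ($n\ge -1$). $C^m_t=\min\{y: C_t(y)=\min_x C_t(x)\}$; with $z_{n_0}<C^m_t\le z_{n_0+1}$, $S^U_t=\min\{z_m\in Z_\theta: z_m\ge C^m_t,\ C_t(z_m)>C_t(z_{n_0})+K_t\}$. $s_{T-1}$ is a point with $s_{T-1}\le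 C^m_{T-1}$, $C_{T-1}(s_{T-1})=C_{T-1}(C^m_{T-1})+K_{T-1}$; $\bar I_{T-1}=s_{T-1}$. For $t=T-2,\dots,0$: $I_t=\max\{z_m\in Z_\theta: z_m<\min(\bar I_{t+1}-\theta,C^m_t)\}$, $\bar I_t=\max\{z_m\in Z_\theta: z_m\le I_t,\ C_t(z_m)>C_t(I_t)+K_t\}+\theta$. $H_{T-1}=C_{T-1}$, $S_{T-1}=C^m_{T-1}$; $V_t(y)=H_t(S_t)+K_t$ for $y<s_t$, $V_t(y)=H_t(y)$ for $y\ge s_t$. For $t=T-2,\dots,0$: $H_t(y)=C_t(y)+\alpha\sum_{n=-1}^\infty V_{t+1}(y-z_n)f_t(n)$; $S_t=\max\{z_m\in Z_\theta: I_t\le z_m\le S^U_t,\ H_t(z_m)=\min\{H_t(z_n):z_n\in Z_\theta, I_t\le z_n\le S^U_t\}\}$; $s_t=S_t$ if $K_t=0$, else $s_t=\min\{z_m\in Z_\theta:\bar I_t\le z_m\le S_t,\ H_t(z_m)\le H_t(S_t)+K_t\}$. Estimate functions. $\psi_{T-1}(x,y)=\bar\psi_{T-1}(x,y)=\gamma_{T-1}x$; $\varphi_{T-1}(x,y)=\bar\varphi_{T-1}(x,y)=0$ if $y<s_{T-1}$ and $=\gamma_{T-1}x$ if $y\ge s_{T-1}$. For $t=0,\dots,T-2$, with $n$ the integer such that $z_{n-1}\le y-s_{t+1}<z_n$: $\psi_t(x,y)=\gamma_tx$ if $y<s_{t+1}-\theta$, else $\psi_t(x,y)=\gamma_tx+\alpha\sum_{m=-1}^{n-1}\varphi_{t+1}(x,y-z_m)f_t(m)$;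 $\varphi_t(x,y)=0$ if $y<s_t$, $=\psi_t(y-s_t,y)$ if $y\ge s_t$ and $y-x<s_t$, $=\psi_t(x,y)$ if $y\ge s_t$ and $y-x\ge s_t$. Likewise $\bar\psi_t(x,y)=\gamma_tx$ if $y<s_{t+1}-\theta$, else $\bar\psi_t(x,y)=\gamma_tx+\alpha\sum_{m=-1}^{n-1}\bar\varphi_{t+1}(x,y-z_m)f_t(m)$; $\bar\varphi_t(x,y)=0$ if $y<s_t$, $=\bar\psi_t(y-s_t+\theta,y)$ if $y\ge s_t$ and $y-x<s_t$, $=\bar\psi_t(x,y)$ if $y\ge s_t$ and $y-x\ge s_t$. Error-bound functions. $\omega_{T-1}\equiv\bar\omega_{T-1}\equiv 0$, $\eta_{T-1}=0$. For $t=T-2,\dots,0$: $\omega_t(x)=\psi_t(\theta,x)-\gamma_t\theta+\alpha\sum_{n=-1}^\infty\bar\omega_{t+1}(x-z_n)f_t(n)$; $\eta_t=\bar\psi_t(\theta,S^U_t)+\omega_t(S^U_t)$; $\bar\omega_t(x)=\eta_t$ if $x\le S^U_t$ and $\bar\omega_t(x)=\max(\eta_t,\omega_t(x))$ if $x>S^U_t$. *)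

theory Defs
  imports "HOL-Probability.Probability"
begin

text \<open>Periods are t = 0,...,T-1; cost c_T is the salvage
coefficient.  The demand D_t is given through its distribution, a probability
measure on the reals; F_t is its distribution function.\<close>

record invmodel =
  Hor   :: nat
  disc  :: real
  cost  :: "nat \<Rightarrow> real"           (* c_t, t = 0..T *)
  Kc    :: "nat \<Rightarrow> real"
  Gf    :: "nat \<Rightarrow> real \<Rightarrow> real"
  dem   :: "nat \<Rightarrow> real measure"
  theta :: real
  gam   :: "nat \<Rightarrow> real"

definition EDem :: "invmodel \<Rightarrow> nat \<Rightarrow> real" where
  "EDem P t = integral\<^sup>L (dem P t) (\<lambda>x. x)"

definition Fd :: "invmodel \<Rightarrow> nat \<Rightarrow> real \<Rightarrow> real" where
  "Fd P t x = measure (dem P t) {..x}"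

definition Cf :: "invmodel \<Rightarrow> nat \<Rightarrow> real \<Rightarrow> real" where
  "Cf P t y = (cost P t - disc P * cost P (Suc t)) * y + Gf P t y
              + disc P * cost P (Suc t) * EDem P t"

definition zg :: "invmodel \<Rightarrow> int \<Rightarrow> real" where
  "zg P m = real_of_int m * theta P"

definition fd :: "invmodel \<Rightarrow> nat \<Rightarrow> int \<Rightarrow> real" where
  "fd P t n = Fd P t (zg P (n + 1)) - Fd P t (zg P n)"

definition Cmin :: "invmodel \<Rightarrow> nat \<Rightarrow> real" where
  "Cmin P t = Inf {y. Cf P t y = Inf (range (Cf P t))}"

definition n0 :: "invmodel \<Rightarrow> nat \<Rightarrow> int" where
  "n0 P t = (THE n. zg P n < Cmin P t \<and> Cmin P t \<le> zg P (n + 1))"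

definition SU :: "invmodel \<Rightarrow> nat \<Rightarrow> real" where
  "SU P t = zg P (LEAST m. zg P m \<ge> Cmin P t \<and>
                       Cf P t (zg P m) > Cf P t (zg P (n0 P t)) + Kc P t)"

definition sT1 :: "invmodel \<Rightarrow> real" where
  "sT1 P = (SOME s. s \<le> Cmin P (Hor P - 1) \<and>
      Cf P (Hor P - 1) s = Cf P (Hor P - 1) (Cmin P (Hor P - 1)) + Kc P (Hor P - 1))"

text \<open>I_t computed from \<open>Ib'\<close> = bar I_{t+1}.\<close>
definition gridI :: "invmodel \<Rightarrow> nat \<Rightarrow> real \<Rightarrow> real" where
  "gridI P t Ib' = zg P (GREATEST m. zg P m < min (Ib' - theta P) (Cmin P t))"

text \<open>The sum over n = -1,0,1,... is written as a series over k :: nat with n = k - 1.\<close>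

function stage :: "invmodel \<Rightarrow> nat \<Rightarrow> real \<times> (real \<Rightarrow> real) \<times> real \<times> real" where
  "stage P t =
     (if Hor P - 1 \<le> t then (sT1 P, Cf P t, Cmin P t, sT1 P)
      else
       (let st = stage P (Suc t);
            Ib' = fst st; H' = fst (snd st); S' = fst (snd (snd st)); s' = snd (snd (snd st));
            V' = (\<lambda>y. if y < s' then H' S' + Kc P (Suc t) else H' y);
            I = gridI P t Ib';
            Ib = zg P (GREATEST m. zg P m \<le> I \<and> Cf P t (zg P m) > Cf P t I + Kc P t) + theta P;
            H = (\<lambda>y. Cf P t y + disc P *
                   (\<Sum>k. V' (y - zg P (int k - 1)) * fd P t (int k - 1)));
            A = {m. I \<le> zg P m \<and> zg P m \<le> SU P t};
            S = zg P (GREATEST m. m \<in> A \<and> H (zg P m) = Min ((\<lambda>n. H (zg P n)) ` A));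
            s = (if Kc P t = 0 then S
                 else zg P (LEAST m. Ib \<le> zg P m \<and> zg P m \<le> S \<and> H (zg P m) \<le> H S + Kc P t))
        in (Ib, H, S, s)))"
  by pat_completeness auto
termination by (relation "Wellfounded.measure (\<lambda>(P, t). Hor P - t)") auto

definition Ibar :: "invmodel \<Rightarrow> nat \<Rightarrow> real" where "Ibar P t = fst (stage P t)"
definition Hf :: "invmodel \<Rightarrow> nat \<Rightarrow> real \<Rightarrow> real" where "Hf P t = fst (snd (stage P t))"
definition Sf :: "invmodel \<Rightarrow> nat \<Rightarrow> real" where "Sf P t = fst (snd (snd (stage P t)))"
definition sf :: "invmodel \<Rightarrow> nat \<Rightarrow> real" where "sf P t = snd (snd (snd (stage P t)))"
definition If :: "invmodel \<Rightarrow> nat \<Rightarrow> real" where "If P t = gridI P t (Ibar P (Suc t))"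

text \<open>One step of psi_t (t \<le> T-2), given g = phi_{t+1}; n is the integer with
  z_{n-1} \<le> y - s_{t+1} < z_n.\<close>
definition psi_step :: "invmodel \<Rightarrow> nat \<Rightarrow> (real \<Rightarrow> real \<Rightarrow> real) \<Rightarrow> real \<Rightarrow> real \<Rightarrow> real" where
  "psi_step P t g x y =
     (if y < sf P (Suc t) - theta P then gam P t * x
      else (let n = (THE n::int. zg P (n - 1) \<le> y - sf P (Suc t) \<and> y - sf P (Suc t) < zg P n)
            in gam P t * x + disc P * (\<Sum>m\<in>{-1..n-1}. g x (y - zg P m) * fd P t m)))"

function phi :: "invmodel \<Rightarrow> nat \<Rightarrow> real \<Rightarrow> real \<Rightarrow> real" where
  "phi P t x y =
     (if Hor P - 1 \<le> t then (if y < sf P t then 0 else gam P t * x)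
      else (if y < sf P t then 0
            else if y - x < sf P t then psi_step P t (phi P (Suc t)) (y - sf P t) y
            else psi_step P t (phi P (Suc t)) x y))"
  by pat_completeness auto
termination by (relation "Wellfounded.measure (\<lambda>(P, t, x, y). Hor P - t)") auto

definition psi :: "invmodel \<Rightarrow> nat \<Rightarrow> real \<Rightarrow> real \<Rightarrow> real" where
  "psi P t x y = (if Hor P - 1 \<le> t then gam P t * x else psi_step P t (phi P (Suc t)) x y)"

function phib :: "invmodel \<Rightarrow> nat \<Rightarrow> real \<Rightarrow> real \<Rightarrow> real" where
  "phib P t x y =
     (if Hor P - 1 \<le> t then (if y < sf P t then 0 else gam P t * x)
      else (if y < sf P t then 0
            else if y - x < sf P t then psi_step P t (phib P (Suc t)) (y - sf P t + theta P) y
            else psi_step P t (phib P (Suc t)) x y))"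
  by pat_completeness auto
termination by (relation "Wellfounded.measure (\<lambda>(P, t, x, y). Hor P - t)") auto

definition psib :: "invmodel \<Rightarrow> nat \<Rightarrow> real \<Rightarrow> real \<Rightarrow> real" where
  "psib P t x y = (if Hor P - 1 \<le> t then gam P t * x else psi_step P t (phib P (Suc t)) x y)"

text \<open>omega_t for t \<le> T-2 given g = bar omega_{t+1}.\<close>
definition omega_step :: "invmodel \<Rightarrow> nat \<Rightarrow> (real \<Rightarrow> real) \<Rightarrow> real \<Rightarrow> real" where
  "omega_step P t g x = psi P t (theta P) x - gam P t * theta P
      + disc P * (\<Sum>k. g (x - zg P (int k - 1)) * fd P t (int k - 1))"

function omegab :: "invmodel \<Rightarrow> nat \<Rightarrow> real \<Rightarrow> real" where
  "omegab P t x =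
     (if Hor P - 1 \<le> t then 0
      else (let om = omega_step P t (omegab P (Suc t));
                eta = psib P t (theta P) (SU P t) + om (SU P t)
            in if x \<le> SU P t then eta else max eta (om x)))"
  by pat_completeness auto
termination by (relation "Wellfounded.measure (\<lambda>(P, t, x). Hor P - t)") auto

definition omega :: "invmodel \<Rightarrow> nat \<Rightarrow> real \<Rightarrow> real" where
  "omega P t x = (if Hor P - 1 \<le> t then 0 else omega_step P t (omegab P (Suc t)) x)"

definition eta :: "invmodel \<Rightarrow> nat \<Rightarrow> real" where
  "eta P t = (if Hor P - 1 \<le> t then 0 else psib P t (theta P) (SU P t) + omega P t (SU P t))"

definition model_ok :: "invmodel \<Rightarrow> bool" where
  "model_ok P \<longleftrightarrow>
     Hor P \<ge> 2 \<and> 0 < disc P \<and> disc P \<le> 1 \<and> theta P > 0 \<and>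
     (\<forall>t < Hor P.
        Kc P t \<ge> 0 \<and>
        prob_space (dem P t) \<and> sets (dem P t) = sets borel \<and>
        (AE x in dem P t. 0 \<le> x) \<and> integrable (dem P t) (\<lambda>x. x) \<and>
        convex_on UNIV (Cf P t) \<and>
        filterlim (Cf P t) at_top at_top \<and> filterlim (Cf P t) at_top at_bot \<and>
        gam P t \<ge> 0 \<and> (\<forall>x y. \<bar>Cf P t x - Cf P t y\<bar> \<le> gam P t * \<bar>x - y\<bar>)) \<and>
     (\<forall>t. t + 2 \<le> Hor P \<longrightarrow> Kc P t \<ge> disc P * Kc P (Suc t))"

end

theory Submission imports Defs begin

context fixes P :: invmodel assumes mo: "model_ok P" begin

lemma th_pos: "theta P > 0" using mo by (simp add: model_ok_def)
lemma disc_pos: "disc P > 0" using mo by (simp add: model_ok_def)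
lemma gam_nn: "t < Hor P \<Longrightarrow> gam P t \<ge> 0" using mo by (simp add: model_ok_def)

lemma Fd_facts:
  assumes "t < Hor P"
  shows "0 \<le> Fd P t a" "Fd P t a \<le> 1" "a \<le> b \<Longrightarrow> Fd P t a \<le> Fd P t b"
proof -
  have ps: "prob_space (dem P t)" and se: "sets (dem P t) = sets borel"
    using mo assms by (auto simp: model_ok_def)
  show "0 \<le> Fd P t a" by (simp add: Fd_def)
  show "Fd P t a \<le> 1" unfolding Fd_def using prob_space.prob_le_1[OF ps] by blast
  assume "a \<le> b"
  then show "Fd P t a \<le> Fd P t b" unfolding Fd_def
    using finite_measure.finite_measure_mono[OF prob_space.axioms(1)[OF ps], of "{..a}" "{..b}"] se
    by auto
qed

lemma zg_mono: "m \<le> n \<Longrightarrow> zg P m \<le> zg P n"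
  using th_pos by (simp add: zg_def mult_right_mono)

lemma fd_nn: "t < Hor P \<Longrightarrow> 0 \<le> fd P t m"
  unfolding fd_def using Fd_facts(3)[of t "zg P m" "zg P (m+1)"] zg_mono[of m "m+1"] by simp

lemma fd_partial: "t < Hor P \<Longrightarrow> (\<Sum>k<n. fd P t (int k - 1)) \<le> 1"
proof -
  assume a: "t < Hor P"
  have "(\<Sum>k<n. fd P t (int k - 1)) = (\<Sum>k<n. Fd P t (zg P (int (Suc k) - 1)) - Fd P t (zg P (int k - 1)))"
    by (simp add: fd_def)
  also have "\<dots> = Fd P t (zg P (int n - 1)) - Fd P t (zg P (int 0 - 1))"
    by (rule sum_lessThan_telescope[where f = "\<lambda>k. Fd P t (zg P (int k - 1))"])
  also have "\<dots> \<le> 1" using Fd_facts[OF a] by (smt (verit))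
  finally show ?thesis .
qed

lemma fd_summable: "t < Hor P \<Longrightarrow> summable (\<lambda>k. fd P t (int k - 1))"
  by (rule summableI_nonneg_bounded[where x=1]) (auto intro: fd_nn fd_partial)

lemma fd_suminf: "t < Hor P \<Longrightarrow> (\<Sum>k. fd P t (int k - 1)) \<le> 1"
  by (rule suminf_le_const) (auto intro: fd_summable fd_partial)

definition Nof :: "real \<Rightarrow> int" where "Nof d = \<lfloor>d / theta P\<rfloor> + 1"

lemma Nof: "d < zg P (Nof d)"
proof -
  have "d / theta P < of_int (\<lfloor>d / theta P\<rfloor> + 1)" by linarith
  then show ?thesis using th_pos by (simp add: zg_def Nof_def field_simps)
qed

lemma the_n: assumes "zg P (n - 1) \<le> d" "d < zg P n"
  shows "n = Nof d"
proof -
  have "of_int (n-1) \<le> d / theta P" "d / theta P < of_int n"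
    using assms th_pos by (auto simp: zg_def field_simps)
  then have "\<lfloor>d / theta P\<rfloor> = n - 1" by (intro floor_unique) auto
  then show ?thesis by (simp add: Nof_def)
qed

lemma Nof_lb: "zg P (Nof d - 1) \<le> d"
proof -
  have "of_int \<lfloor>d / theta P\<rfloor> \<le> d / theta P" by linarith
  then have "of_int \<lfloor>d / theta P\<rfloor> * theta P \<le> d / theta P * theta P"
    using th_pos by (intro mult_right_mono) auto
  then show ?thesis using th_pos by (simp add: zg_def Nof_def)
qed

lemma psi_step_sum:
  assumes g0: "\<And>x y'. y' < sf P (Suc t) \<Longrightarrow> g x y' = 0"
    and N: "y - sf P (Suc t) < zg P N"
  shows "psi_step P t g x y = gam P t * x + disc P * (\<Sum>m\<in>{-1..N-1}. g x (y - zg P m) * fd P t m)"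
proof (cases "y < sf P (Suc t) - theta P")
  case True
  have "(\<Sum>m\<in>{-1..N-1}. g x (y - zg P m) * fd P t m) = 0"
  proof (rule sum.neutral, intro ballI)
    fix m assume "m \<in> {-1..N-1}"
    then have "zg P (-1) \<le> zg P m" by (intro zg_mono) auto
    then have "y - zg P m < sf P (Suc t)" using True by (simp add: zg_def)
    then show "g x (y - zg P m) * fd P t m = 0" using g0 by simp
  qed
  then show ?thesis using True by (simp add: psi_step_def)
next
  case False
  let ?d = "y - sf P (Suc t)"
  have th: "(THE n::int. zg P (n - 1) \<le> ?d \<and> ?d < zg P n) = Nof ?d"
    by (rule the_equality) (auto simp: Nof Nof_lb the_n)
  have le: "Nof ?d \<le> N"
  proof -
    have "zg P (Nof ?d - 1) < zg P N" using Nof_lb[of ?d] N by linarith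
    then have "Nof ?d - 1 < N" using th_pos by (simp add: zg_def)
    then show ?thesis by simp
  qed
  have "(\<Sum>m\<in>{-1..Nof ?d-1}. g x (y - zg P m) * fd P t m) = (\<Sum>m\<in>{-1..N-1}. g x (y - zg P m) * fd P t m)"
  proof (rule sum.mono_neutral_left)
    show "\<forall>i\<in>{-1..N - 1} - {-1..Nof ?d - 1}. g x (y - zg P i) * fd P t i = 0"
    proof
      fix i assume "i \<in> {-1..N - 1} - {-1..Nof ?d - 1}"
      then have "Nof ?d \<le> i" by auto
      then have "zg P (Nof ?d) \<le> zg P i" by (rule zg_mono)
      then have "y - zg P i < sf P (Suc t)" using Nof[of ?d] by linarith
      then show "g x (y - zg P i) * fd P t i = 0" using g0 by simp
    qed
  qed (use le in auto)
  then show ?thesis using False by (simp add: psi_step_def th Let_def)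
qed

lemma psi_step_cmp:
  assumes g0: "\<And>x y'. y' < sf P (Suc t) \<Longrightarrow> g x y' = 0"
    and h0: "\<And>x y'. y' < sf P (Suc t) \<Longrightarrow> h x y' = 0"
    and y: "y1 \<le> y2" and tH: "t < Hor P"
    and gh: "\<And>m. -1 \<le> m \<Longrightarrow> g x1 (y1 - zg P m) \<le> h x2 (y2 - zg P m)"
    and gx: "gam P t * x1 \<le> gam P t * x2"
  shows "psi_step P t g x1 y1 \<le> psi_step P t h x2 y2"
proof -
  define N where "N = Nof (y2 - sf P (Suc t))"
  have N2: "y2 - sf P (Suc t) < zg P N" unfolding N_def by (rule Nof)
  have N1: "y1 - sf P (Suc t) < zg P N" using N2 y by linarith
  have "(\<Sum>m\<in>{-1..N-1}. g x1 (y1 - zg P m) * fd P t m) \<le> (\<Sum>m\<in>{-1..N-1}. h x2 (y2 - zg P m) * fd P t m)"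
    by (intro sum_mono mult_right_mono gh fd_nn tH) auto
  then have "disc P * (\<Sum>m\<in>{-1..N-1}. g x1 (y1 - zg P m) * fd P t m) \<le> disc P * (\<Sum>m\<in>{-1..N-1}. h x2 (y2 - zg P m) * fd P t m)"
    using disc_pos by (intro mult_left_mono) auto
  moreover have "psi_step P t g x1 y1 = gam P t * x1 + disc P * (\<Sum>m\<in>{-1..N-1}. g x1 (y1 - zg P m) * fd P t m)"
    using g0 N1 by (rule psi_step_sum)
  moreover have "psi_step P t h x2 y2 = gam P t * x2 + disc P * (\<Sum>m\<in>{-1..N-1}. h x2 (y2 - zg P m) * fd P t m)"
    using h0 N2 by (rule psi_step_sum)
  ultimately show ?thesis using gx by linarith
qed

lemma psi_step_lb:
  assumes g0: "\<And>x y'. y' < sf P (Suc t) \<Longrightarrow> g x y' = 0"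
    and tH: "t < Hor P" and gn: "\<And>y. 0 \<le> g x y"
  shows "gam P t * x \<le> psi_step P t g x y"
proof -
  define N where "N = Nof (y - sf P (Suc t))"
  have N: "y - sf P (Suc t) < zg P N" unfolding N_def by (rule Nof)
  have "0 \<le> (\<Sum>m\<in>{-1..N-1}. g x (y - zg P m) * fd P t m)"
    by (intro sum_nonneg mult_nonneg_nonneg gn fd_nn tH)
  then have "0 \<le> disc P * (\<Sum>m\<in>{-1..N-1}. g x (y - zg P m) * fd P t m)"
    using disc_pos by simp
  moreover have "psi_step P t g x y = gam P t * x + disc P * (\<Sum>m\<in>{-1..N-1}. g x (y - zg P m) * fd P t m)"
    using g0 N by (rule psi_step_sum)
  ultimately show ?thesis by linarith
qed

lemma phi_lt: "y < sf P t \<Longrightarrow> phi P t x y = 0" by (subst phi.simps) simp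
lemma phib_lt: "y < sf P t \<Longrightarrow> phib P t x y = 0" by (subst phib.simps) simp

declare phi.simps[simp del] phib.simps[simp del]

lemma phi_eq: "\<not> Hor P - 1 \<le> t \<Longrightarrow>
   phi P t x y = (if y < sf P t then 0 else psi P t (min x (y - sf P t)) y)"
  by (subst phi.simps) (simp add: psi_def min_def)

lemma phib_eq: "\<not> Hor P - 1 \<le> t \<Longrightarrow>
   phib P t x y = (if y < sf P t then 0 else if y - x < sf P t then psib P t (y - sf P t + theta P) y
                   else psib P t x y)"
  by (subst phib.simps) (simp add: psib_def)

definition Aprop where "Aprop t \<longleftrightarrow>
  (\<forall>x y. 0\<le>x \<longrightarrow> 0 \<le> phi P t x y \<and> 0 \<le> phib P t x y) \<and>
  (\<forall>x1 x2 y. 0\<le>x1 \<longrightarrow> x1\<le>x2 \<longrightarrow> phi P t x1 y \<le> phi P t x2 y \<and> phib P t x1 y \<le> phib P t x2 y) \<and>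
  (\<forall>x y1 y2. 0\<le>x \<longrightarrow> y1\<le>y2 \<longrightarrow> phi P t x y1 \<le> phi P t x y2) \<and>
  (\<forall>y1 y2. y1\<le>y2 \<longrightarrow> phi P t (theta P) y1 \<le> phib P t (theta P) y2)"

definition Bprop where "Bprop t \<longleftrightarrow>
  (\<forall>x y. 0\<le>x \<longrightarrow> gam P t * x \<le> psi P t x y \<and> gam P t * x \<le> psib P t x y) \<and>
  (\<forall>x1 x2 y. 0\<le>x1 \<longrightarrow> x1\<le>x2 \<longrightarrow> psi P t x1 y \<le> psi P t x2 y \<and> psib P t x1 y \<le> psib P t x2 y) \<and>
  (\<forall>x y1 y2. 0\<le>x \<longrightarrow> y1\<le>y2 \<longrightarrow> psi P t x y1 \<le> psi P t x y2) \<and>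
  (\<forall>y1 y2. y1\<le>y2 \<longrightarrow> psi P t (theta P) y1 \<le> psib P t (theta P) y2)"

lemma A_last: assumes "t = Hor P - 1" shows "Aprop t"
proof -
  have H: "Hor P \<ge> 2" using mo by (simp add: model_ok_def)
  then have g: "gam P t \<ge> 0" using assms gam_nn by simp
  have e: "phi P t x y = (if y < sf P t then 0 else gam P t * x)" for x y
    using assms by (subst phi.simps) simp
  have eb: "phib P t x y = (if y < sf P t then 0 else gam P t * x)" for x y
    using assms by (subst phib.simps) simp
  show ?thesis unfolding Aprop_def e eb using g th_pos
    by (auto simp: mult_left_mono)
qed

lemma B_last: assumes "t = Hor P - 1" shows "Bprop t"
proof -
  have H: "Hor P \<ge> 2" using mo by (simp add: model_ok_def)
  then have g: "gam P t \<ge> 0" using assms gam_nn by simp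
  show ?thesis unfolding Bprop_def using assms g th_pos
    by (auto simp: mult_left_mono psi_def psib_def)
qed

lemma A_of_B:
  assumes nl: "\<not> Hor P - 1 \<le> t" and B: "Bprop t"
  shows "Aprop t"
proof -
  have g: "gam P t \<ge> 0" using nl gam_nn by simp
  have th: "theta P > 0" by (rule th_pos)
  have b1: "\<And>x y. 0 \<le> x \<Longrightarrow> gam P t * x \<le> psi P t x y"
    and b1': "\<And>x y. 0 \<le> x \<Longrightarrow> gam P t * x \<le> psib P t x y"
    and b2: "\<And>x1 x2 y. 0 \<le> x1 \<Longrightarrow> x1 \<le> x2 \<Longrightarrow> psi P t x1 y \<le> psi P t x2 y"
    and b2': "\<And>x1 x2 y. 0 \<le> x1 \<Longrightarrow> x1 \<le> x2 \<Longrightarrow> psib P t x1 y \<le> psib P t x2 y"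
    and b3: "\<And>x y1 y2. 0 \<le> x \<Longrightarrow> y1 \<le> y2 \<Longrightarrow> psi P t x y1 \<le> psi P t x y2"
    and b4: "\<And>y1 y2. y1 \<le> y2 \<Longrightarrow> psi P t (theta P) y1 \<le> psib P t (theta P) y2"
 proof -
    note BB = B[unfolded Bprop_def]
    show "\<And>x y. 0 \<le> x \<Longrightarrow> gam P t * x \<le> psi P t x y" using BB[THEN conjunct1, rule_format, THEN conjunct1] .
    show "\<And>x y. 0 \<le> x \<Longrightarrow> gam P t * x \<le> psib P t x y" using BB[THEN conjunct1, rule_format, THEN conjunct2] .
    show "\<And>x1 x2 y. 0 \<le> x1 \<Longrightarrow> x1 \<le> x2 \<Longrightarrow> psi P t x1 y \<le> psi P t x2 y" using BB[THEN conjunct2, THEN conjunct1, rule_format, THEN conjunct1] .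
    show "\<And>x1 x2 y. 0 \<le> x1 \<Longrightarrow> x1 \<le> x2 \<Longrightarrow> psib P t x1 y \<le> psib P t x2 y" using BB[THEN conjunct2, THEN conjunct1, rule_format, THEN conjunct2] .
    show "\<And>x y1 y2. 0 \<le> x \<Longrightarrow> y1 \<le> y2 \<Longrightarrow> psi P t x y1 \<le> psi P t x y2" using BB[THEN conjunct2, THEN conjunct2, THEN conjunct1, rule_format] .
    show "\<And>y1 y2. y1 \<le> y2 \<Longrightarrow> psi P t (theta P) y1 \<le> psib P t (theta P) y2" using BB[THEN conjunct2, THEN conjunct2, THEN conjunct2, rule_format] .
  qed
  have p0: "0 \<le> psi P t x y" if "0 \<le> x" for x y
    using b1[OF that, of y] mult_nonneg_nonneg[OF g that] by linarith
  have pb0: "0 \<le> psib P t x y" if "0 \<le> x" for x y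
    using b1'[OF that, of y] mult_nonneg_nonneg[OF g that] by linarith
  have a1: "0 \<le> phi P t x y" if "0 \<le> x" for x y
    using p0[of "min x (y - sf P t)" y] that by (simp add: phi_eq[OF nl])
  have a1': "0 \<le> phib P t x y" if "0 \<le> x" for x y
    using pb0[of "y - sf P t + theta P" y] pb0[OF that, of y] th that by (simp add: phib_eq[OF nl])
  have a2: "phi P t x1 y \<le> phi P t x2 y" if "0 \<le> x1" "x1 \<le> x2" for x1 x2 y
  proof (cases "y < sf P t")
    case False
    then show ?thesis using that b2[of "min x1 (y - sf P t)" "min x2 (y - sf P t)" y]
      by (simp add: phi_eq[OF nl])
  qed (simp add: phi_eq[OF nl])
  have a2': "phib P t x1 y \<le> phib P t x2 y" if "0 \<le> x1" "x1 \<le> x2" for x1 x2 y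
  proof (cases "y < sf P t")
    case False
    show ?thesis
    proof (cases "y - x1 < sf P t")
      case True
      then show ?thesis using False that by (simp add: phib_eq[OF nl])
    next
      case F2: False
      show ?thesis
      proof (cases "y - x2 < sf P t")
        case True
        then show ?thesis using False F2 that th b2'[of x1 "y - sf P t + theta P" y]
          by (simp add: phib_eq[OF nl])
      next
        case False
        then show ?thesis using \<open>\<not> y < sf P t\<close> F2 that b2'[of x1 x2 y]
          by (simp add: phib_eq[OF nl])
      qed
    qed
  qed (simp add: phib_eq[OF nl])
  have a3: "phi P t x y1 \<le> phi P t x y2" if "0 \<le> x" "y1 \<le> y2" for x y1 y2
  proof (cases "y1 < sf P t")
    case True
    then show ?thesis using a1[OF that(1), of y2] by (simp add: phi_eq[OF nl])
  next
    case False
    then have "psi P t (min x (y1 - sf P t)) y1 \<le> psi P t (min x (y2 - sf P t)) y1"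
      using that by (intro b2) auto
    also have "\<dots> \<le> psi P t (min x (y2 - sf P t)) y2"
      using that False by (intro b3) auto
    finally show ?thesis using False that by (simp add: phi_eq[OF nl])
  qed
  have a4: "phi P t (theta P) y1 \<le> phib P t (theta P) y2" if "y1 \<le> y2" for y1 y2
  proof (cases "y1 < sf P t")
    case True
    then show ?thesis using a1'[of "theta P" y2] th by (simp add: phi_eq[OF nl])
  next
    case False
    then have "phi P t (theta P) y1 \<le> psi P t (theta P) y1"
      using th by (simp add: phi_eq[OF nl] b2)
    also have "\<dots> \<le> psib P t (theta P) y2" using that by (rule b4)
    also have "\<dots> \<le> phib P t (theta P) y2"
      using False that th b2'[of "theta P" "y2 - sf P t + theta P" y2]
      by (simp add: phib_eq[OF nl])
    finally show ?thesis .
  qed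
  show ?thesis unfolding Aprop_def using a1 a1' a2 a2' a3 a4 by blast
qed

lemma B_of_A:
  assumes nl: "\<not> Hor P - 1 \<le> t" and A: "Aprop (Suc t)"
  shows "Bprop t"
proof -
  have tH: "t < Hor P" using nl by simp
  have g: "gam P t \<ge> 0" using nl gam_nn by simp
  have th: "theta P > 0" by (rule th_pos)
  have a1: "\<And>x y. 0 \<le> x \<Longrightarrow> 0 \<le> phi P (Suc t) x y"
    and a1': "\<And>x y. 0 \<le> x \<Longrightarrow> 0 \<le> phib P (Suc t) x y"
    and a2: "\<And>x1 x2 y. 0 \<le> x1 \<Longrightarrow> x1 \<le> x2 \<Longrightarrow> phi P (Suc t) x1 y \<le> phi P (Suc t) x2 y"
    and a2': "\<And>x1 x2 y. 0 \<le> x1 \<Longrightarrow> x1 \<le> x2 \<Longrightarrow> phib P (Suc t) x1 y \<le> phib P (Suc t) x2 y"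
    and a3: "\<And>x y1 y2. 0 \<le> x \<Longrightarrow> y1 \<le> y2 \<Longrightarrow> phi P (Suc t) x y1 \<le> phi P (Suc t) x y2"
    and a4: "\<And>y1 y2. y1 \<le> y2 \<Longrightarrow> phi P (Suc t) (theta P) y1 \<le> phib P (Suc t) (theta P) y2"
 proof -
    note BB = A[unfolded Aprop_def]
    show "\<And>x y. 0 \<le> x \<Longrightarrow> 0 \<le> phi P (Suc t) x y" using BB[THEN conjunct1, rule_format, THEN conjunct1] .
    show "\<And>x y. 0 \<le> x \<Longrightarrow> 0 \<le> phib P (Suc t) x y" using BB[THEN conjunct1, rule_format, THEN conjunct2] .
    show "\<And>x1 x2 y. 0 \<le> x1 \<Longrightarrow> x1 \<le> x2 \<Longrightarrow> phi P (Suc t) x1 y \<le> phi P (Suc t) x2 y" using BB[THEN conjunct2, THEN conjunct1, rule_format, THEN conjunct1] .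
    show "\<And>x1 x2 y. 0 \<le> x1 \<Longrightarrow> x1 \<le> x2 \<Longrightarrow> phib P (Suc t) x1 y \<le> phib P (Suc t) x2 y" using BB[THEN conjunct2, THEN conjunct1, rule_format, THEN conjunct2] .
    show "\<And>x y1 y2. 0 \<le> x \<Longrightarrow> y1 \<le> y2 \<Longrightarrow> phi P (Suc t) x y1 \<le> phi P (Suc t) x y2" using BB[THEN conjunct2, THEN conjunct2, THEN conjunct1, rule_format] .
    show "\<And>y1 y2. y1 \<le> y2 \<Longrightarrow> phi P (Suc t) (theta P) y1 \<le> phib P (Suc t) (theta P) y2" using BB[THEN conjunct2, THEN conjunct2, THEN conjunct2, rule_format] .
  qed
  have ps: "psi P t = psi_step P t (phi P (Suc t))" using nl by (simp add: psi_def fun_eq_iff)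
  have pbs: "psib P t = psi_step P t (phib P (Suc t))" using nl by (simp add: psib_def fun_eq_iff)
  have z: "\<And>x y'. y' < sf P (Suc t) \<Longrightarrow> phi P (Suc t) x y' = 0" by (rule phi_lt)
  have zb: "\<And>x y'. y' < sf P (Suc t) \<Longrightarrow> phib P (Suc t) x y' = 0" by (rule phib_lt)
  have c1: "gam P t * x \<le> psi P t x y" if "0 \<le> x" for x y
    unfolding ps using z tH a1[OF that] by (rule psi_step_lb)
  have c1': "gam P t * x \<le> psib P t x y" if "0 \<le> x" for x y
    unfolding pbs using zb tH a1'[OF that] by (rule psi_step_lb)
  have c2: "psi P t x1 y \<le> psi P t x2 y" if "0 \<le> x1" "x1 \<le> x2" for x1 x2 y
    unfolding ps
    by (rule psi_step_cmp[where g="phi P (Suc t)" and h="phi P (Suc t)"])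
       (use that g tH in \<open>auto intro: phi_lt a2 mult_left_mono\<close>)
  have c2': "psib P t x1 y \<le> psib P t x2 y" if "0 \<le> x1" "x1 \<le> x2" for x1 x2 y
    unfolding pbs
    by (rule psi_step_cmp[where g="phib P (Suc t)" and h="phib P (Suc t)"])
       (use that g tH in \<open>auto intro: phib_lt a2' mult_left_mono\<close>)
  have c3: "psi P t x y1 \<le> psi P t x y2" if "0 \<le> x" "y1 \<le> y2" for x y1 y2
    unfolding ps
    by (rule psi_step_cmp[where g="phi P (Suc t)" and h="phi P (Suc t)"])
       (use that g tH in \<open>auto intro: phi_lt a3\<close>)
  have c4: "psi P t (theta P) y1 \<le> psib P t (theta P) y2" if "y1 \<le> y2" for y1 y2
    unfolding ps pbs
    by (rule psi_step_cmp[where g="phi P (Suc t)" and h="phib P (Suc t)"])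
       (use that g tH in \<open>auto intro: phi_lt phib_lt a4\<close>)
  show ?thesis unfolding Bprop_def using c1 c1' c2 c2' c3 c4 by blast
qed

lemma AB: "t \<le> Hor P - 1 \<Longrightarrow> Aprop t \<and> Bprop t"
proof (induction t rule: inc_induct)
  case base
  then show ?case using A_last B_last by simp
next
  case (step n)
  then have nl: "\<not> Hor P - 1 \<le> n" by simp
  have "Bprop n" using B_of_A[OF nl] step.IH by simp
  then show ?case using A_of_B[OF nl] by simp
qed

lemma ser:
  assumes tH: "t < Hor P" and gn: "\<And>y. 0 \<le> g y" and gm: "\<And>a b. a \<le> b \<Longrightarrow> g a \<le> g b"
  shows "summable (\<lambda>k. g (x - zg P (int k - 1)) * fd P t (int k - 1))"
    and "0 \<le> (\<Sum>k. g (x - zg P (int k - 1)) * fd P t (int k - 1))"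
    and "(\<Sum>k. g (x - zg P (int k - 1)) * fd P t (int k - 1)) \<le> g (x + theta P)"
    and "x \<le> x' \<Longrightarrow> (\<Sum>k. g (x - zg P (int k - 1)) * fd P t (int k - 1))
          \<le> (\<Sum>k. g (x' - zg P (int k - 1)) * fd P t (int k - 1))"
proof -
  have le: "y - zg P (int k - 1) \<le> y + theta P" for y k
    using zg_mono[of "-1" "int k - 1"] by (simp add: zg_def)
  have sm: "summable (\<lambda>k. g (y - zg P (int k - 1)) * fd P t (int k - 1))" for y
  proof (rule summable_comparison_test)
    show "summable (\<lambda>k. g (y + theta P) * fd P t (int k - 1))"
      by (intro summable_mult fd_summable tH)
    show "\<exists>N. \<forall>n\<ge>N. norm (g (y - zg P (int n - 1)) * fd P t (int n - 1)) \<le> g (y + theta P) * fd P t (int n - 1)"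
      using gn fd_nn[OF tH] gm[OF le] by (auto intro!: mult_right_mono)
  qed
  show "summable (\<lambda>k. g (x - zg P (int k - 1)) * fd P t (int k - 1))" by (rule sm)
  show "0 \<le> (\<Sum>k. g (x - zg P (int k - 1)) * fd P t (int k - 1))"
    by (intro suminf_nonneg sm mult_nonneg_nonneg gn fd_nn tH)
  have "(\<Sum>k. g (x - zg P (int k - 1)) * fd P t (int k - 1)) \<le> (\<Sum>k. g (x + theta P) * fd P t (int k - 1))"
    by (intro suminf_le sm summable_mult fd_summable tH mult_right_mono gm le fd_nn)
  also have "\<dots> = g (x + theta P) * (\<Sum>k. fd P t (int k - 1))"
    by (intro suminf_mult fd_summable tH)
  also have "\<dots> \<le> g (x + theta P) * 1"
    by (intro mult_left_mono fd_suminf tH gn)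
  finally show "(\<Sum>k. g (x - zg P (int k - 1)) * fd P t (int k - 1)) \<le> g (x + theta P)" by simp
  assume "x \<le> x'"
  then show "(\<Sum>k. g (x - zg P (int k - 1)) * fd P t (int k - 1))
          \<le> (\<Sum>k. g (x' - zg P (int k - 1)) * fd P t (int k - 1))"
    by (intro suminf_le sm mult_right_mono gm fd_nn tH) auto
qed

declare omegab.simps[simp del]

lemma omegab_eq: "\<not> Hor P - 1 \<le> t \<Longrightarrow> omegab P t x =
   (if x \<le> SU P t then psib P t (theta P) (SU P t) + omega_step P t (omegab P (Suc t)) (SU P t)
    else max (psib P t (theta P) (SU P t) + omega_step P t (omegab P (Suc t)) (SU P t))
             (omega_step P t (omegab P (Suc t)) x))"
  by (subst omegab.simps) (simp add: Let_def)

lemma C: "t \<le> Hor P - 1 \<Longrightarrow> (\<forall>x. 0 \<le> omegab P t x) \<and> (\<forall>a b. a \<le> b \<longrightarrow> omegab P t a \<le> omegab P t b)"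
proof (induction t rule: inc_induct)
  case base
  have "omegab P (Hor P - 1) x = 0" for x by (subst omegab.simps) simp
  then show ?case by simp
next
  case (step n)
  then have nl: "\<not> Hor P - 1 \<le> n" by simp
  have tH: "n < Hor P" using nl by simp
  have g: "gam P n \<ge> 0" using tH gam_nn by simp
  have th: "theta P > 0" by (rule th_pos)
  have B: "Bprop n" using AB[of n] nl by simp
  note BB = B[unfolded Bprop_def]
  have b1: "\<And>x y. 0 \<le> x \<Longrightarrow> gam P n * x \<le> psi P n x y" using BB[THEN conjunct1, rule_format, THEN conjunct1] .
  have b1': "\<And>x y. 0 \<le> x \<Longrightarrow> gam P n * x \<le> psib P n x y" using BB[THEN conjunct1, rule_format, THEN conjunct2] .
  have b3: "\<And>x y1 y2. 0 \<le> x \<Longrightarrow> y1 \<le> y2 \<Longrightarrow> psi P n x y1 \<le> psi P n x y2" using BB[THEN conjunct2, THEN conjunct2, THEN conjunct1, rule_format] .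
  define G where "G = omegab P (Suc n)"
  have gn: "\<And>y. 0 \<le> G y" and gm: "\<And>a b. a \<le> b \<Longrightarrow> G a \<le> G b" using step.IH unfolding G_def by auto
  define om where "om = omega_step P n G"
  have om0: "0 \<le> om y" for y
  proof -
    have "gam P n * theta P \<le> psi P n (theta P) y" using b1 th by simp
    moreover have "0 \<le> disc P * (\<Sum>k. G (y - zg P (int k - 1)) * fd P n (int k - 1))"
      using ser(2)[where g=G, OF tH gn gm] disc_pos by simp
    ultimately show ?thesis unfolding om_def omega_step_def by linarith
  qed
  have omm: "om a \<le> om b" if "a \<le> b" for a b
  proof -
    have "psi P n (theta P) a \<le> psi P n (theta P) b" using b3 th that by simp
    moreover have "disc P * (\<Sum>k. G (a - zg P (int k - 1)) * fd P n (int k - 1))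
                 \<le> disc P * (\<Sum>k. G (b - zg P (int k - 1)) * fd P n (int k - 1))"
      using ser(4)[where g=G, OF tH gn gm that] disc_pos by (intro mult_left_mono) auto
    ultimately show ?thesis unfolding om_def omega_step_def by linarith
  qed
  have pb0: "0 \<le> psib P n (theta P) (SU P n)"
    using b1'[of "theta P" "SU P n"] th g mult_nonneg_nonneg[OF g, of "theta P"] by linarith
  have e: "omegab P n x = (if x \<le> SU P n then psib P n (theta P) (SU P n) + om (SU P n)
        else max (psib P n (theta P) (SU P n) + om (SU P n)) (om x))" for x
    unfolding om_def G_def by (rule omegab_eq[OF nl])
  show ?case
  proof (intro conjI allI impI)
    fix x show "0 \<le> omegab P n x" unfolding e using pb0 om0 by (auto simp: le_max_iff_disj)
  next
    fix a b :: real assume "a \<le> b"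
    then show "omegab P n a \<le> omegab P n b" unfolding e using omm[of a b] omm[of "SU P n" b]
      by (auto simp: le_max_iff_disj max_def)
  qed
qed

end

theorem lemma4p8:
  fixes P :: invmodel and t :: nat and x :: real
  assumes "model_ok P"
    and "t + 2 \<le> Hor P"
  shows "omegab P t x \<le> psib P t (theta P) (SU P t) + psib P t (theta P) (max x (SU P t))
           - gam P t * theta P + disc P * omegab P (Suc t) (theta P + max x (SU P t))"
proof -
  note mo = assms(1)
  have nl: "\<not> Hor P - 1 \<le> t" using assms(2) by simp
  have tH: "t < Hor P" using nl by simp
  have g: "gam P t \<ge> 0" using tH gam_nn[OF mo] by simp
  have th: "theta P > 0" by (rule th_pos[OF mo])
  have dp: "disc P > 0" by (rule disc_pos[OF mo])
  have B: "Bprop P t" using AB[OF mo, of t] nl by simp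
  note BB = B[unfolded Bprop_def[OF mo]]
  have b1': "\<And>x y. 0 \<le> x \<Longrightarrow> gam P t * x \<le> psib P t x y" using BB[THEN conjunct1, rule_format, THEN conjunct2] .
  have b4: "\<And>y1 y2. y1 \<le> y2 \<Longrightarrow> psi P t (theta P) y1 \<le> psib P t (theta P) y2" using BB[THEN conjunct2, THEN conjunct2, THEN conjunct2, rule_format] .
  define G where "G = omegab P (Suc t)"
  have CC: "(\<forall>x. 0 \<le> G x) \<and> (\<forall>a b. a \<le> b \<longrightarrow> G a \<le> G b)" unfolding G_def
    by (rule C[OF mo]) (use nl in simp)
  have gn: "\<And>y. 0 \<le> G y" and gm: "\<And>a b. a \<le> b \<Longrightarrow> G a \<le> G b" using CC by auto
  define om where "om = omega_step P t G"
  have key: "om y \<le> psib P t (theta P) y' - gam P t * theta P + disc P * G (theta P + y')" if "y \<le> y'" for y y'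
  proof -
    have "(\<Sum>k. G (y - zg P (int k - 1)) * fd P t (int k - 1)) \<le> G (y + theta P)"
      by (rule ser(3)[OF mo, where g=G, OF tH gn gm])
    also have "\<dots> \<le> G (theta P + y')" using that by (intro gm) simp
    finally have "disc P * (\<Sum>k. G (y - zg P (int k - 1)) * fd P t (int k - 1)) \<le> disc P * G (theta P + y')"
      using dp by (intro mult_left_mono) auto
    then show ?thesis using b4[OF that] unfolding om_def omega_step_def by linarith
  qed
  have pb0: "0 \<le> psib P t (theta P) (SU P t)"
    using b1'[of "theta P" "SU P t"] th g mult_nonneg_nonneg[OF g, of "theta P"] by linarith
  have e: "omegab P t x = (if x \<le> SU P t then psib P t (theta P) (SU P t) + om (SU P t)
        else max (psib P t (theta P) (SU P t) + om (SU P t)) (om x))"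
    unfolding om_def G_def by (rule omegab_eq[OF mo nl])
  show ?thesis
  proof (cases "x \<le> SU P t")
    case True
    then show ?thesis unfolding e G_def[symmetric] using key[of "SU P t" "SU P t"] by (simp add: max_def)
  next
    case False
    then have M: "max x (SU P t) = x" by simp
    show ?thesis unfolding e G_def[symmetric] M using False key[of x x] key[of "SU P t" x] pb0 by auto
  qed
qed

end
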